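(* Let $G_1$ be a group and $k\ge1$ an integer such that $|G_1:C_{G_1}(a)|\le k$ for every $a\in G_1$. Let $n,m\ge0$, let $G\le G_1^n$ be a subgroup, and let $\mu$ be a left-invariant probability measure on some algebra of subsets of $G$, with inner measure $\mu_*$. Let $w(\bar x,\bar y)$ be a group word in the variables $\bar x=(x_1,\dots,x_n)$, $\bar y=(y_1,\dots,y_m)$ and their inverses, and let $\bar g\in G_1^m$, $c\in G_1$. If $w(\bar h,\bar g)=c$ does not hold for all $\bar h\in G$, then $$\mu_*(\{\bar h\in G:w(\bar h,\bar g)=c\})\le1-\frac1{2k^{n^2+mn}}.$$
   Context: The inner measure is $\mu_*(X)=\sup\{\mu(Y):Y\subseteq X\text{ measurable}\}$. *)

theory Defs
  imports "HOL-Analysis.Analysis" "HOL-Algebra.Coset"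
begin

definition centralizer :: "('a, 'b) monoid_scheme \<Rightarrow> 'a \<Rightarrow> 'a set" where
  "centralizer G a = {x \<in> carrier G. x \<otimes>\<^bsub>G\<^esub> a = a \<otimes>\<^bsub>G\<^esub> x}"

definition pow_group :: "('a, 'b) monoid_scheme \<Rightarrow> nat \<Rightarrow> 'a list monoid" where
  "pow_group G n =
     \<lparr>carrier = {h. length h = n \<and> set h \<subseteq> carrier G},
      mult = (\<lambda>h h'. map2 (\<otimes>\<^bsub>G\<^esub>) h h'),
      one = replicate n \<one>\<^bsub>G\<^esub>\<rparr>"

text \<open>Group words in variables x_1..x_n (XVar i) and y_1..y_m (YVar j) and their inverses.
  A letter (v, True) is the variable v, (v, False) its inverse.\<close>
datatype var = XVar nat | YVar nat

type_synonym word = "(var \<times> bool) list"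

definition word_in_vars :: "nat \<Rightarrow> nat \<Rightarrow> word \<Rightarrow> bool" where
  "word_in_vars n m w \<longleftrightarrow>
     (\<forall>(v, e) \<in> set w. (case v of XVar i \<Rightarrow> i < n | YVar j \<Rightarrow> j < m))"

fun eval_letter :: "('a, 'b) monoid_scheme \<Rightarrow> 'a list \<Rightarrow> 'a list \<Rightarrow> var \<times> bool \<Rightarrow> 'a" where
  "eval_letter G h g (XVar i, e) = (if e then h ! i else inv\<^bsub>G\<^esub> (h ! i))"
| "eval_letter G h g (YVar j, e) = (if e then g ! j else inv\<^bsub>G\<^esub> (g ! j))"

definition eval_word :: "('a, 'b) monoid_scheme \<Rightarrow> word \<Rightarrow> 'a list \<Rightarrow> 'a list \<Rightarrow> 'a" where
  "eval_word G w h g = foldr (\<lambda>l acc. eval_letter G h g l \<otimes>\<^bsub>G\<^esub> acc) w \<one>\<^bsub>G\<^esub>"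

definition prob_measure_on_algebra :: "'a set \<Rightarrow> 'a set set \<Rightarrow> ('a set \<Rightarrow> real) \<Rightarrow> bool" where
  "prob_measure_on_algebra \<Omega> A \<mu> \<longleftrightarrow>
     algebra \<Omega> A \<and>
     (\<forall>X \<in> A. 0 \<le> \<mu> X) \<and>
     (\<forall>X \<in> A. \<forall>Y \<in> A. X \<inter> Y = {} \<longrightarrow> \<mu> (X \<union> Y) = \<mu> X + \<mu> Y) \<and>
     \<mu> \<Omega> = 1"

definition left_invariant :: "('a, 'b) monoid_scheme \<Rightarrow> 'a set \<Rightarrow> 'a set set \<Rightarrow> ('a set \<Rightarrow> real) \<Rightarrow> bool" where
  "left_invariant H \<Omega> A \<mu> \<longleftrightarrow>
     (\<forall>g \<in> \<Omega>. \<forall>X \<in> A. (\<lambda>x. g \<otimes>\<^bsub>H\<^esub> x) ` X \<in> A \<and> \<mu> ((\<lambda>x. g \<otimes>\<^bsub>H\<^esub> x) ` X) = \<mu> X)"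

definition inner_measure :: "'a set set \<Rightarrow> ('a set \<Rightarrow> real) \<Rightarrow> 'a set \<Rightarrow> real" where
  "inner_measure A \<mu> X = Sup {\<mu> Y | Y. Y \<in> A \<and> Y \<subseteq> X}"

end

theory Submission
  imports Defs
begin

lemma (in group) comm_inv:
  assumes "x \<in> carrier G" "a \<in> carrier G" "x \<otimes> a = a \<otimes> x"
  shows "x \<otimes> inv a = inv a \<otimes> x"
proof -
  have "x \<otimes> inv a = (inv a \<otimes> a) \<otimes> x \<otimes> inv a" using assms by (metis inv_closed l_inv l_one)
  also have "\<dots> = inv a \<otimes> (a \<otimes> x) \<otimes> inv a" using assms by (metis inv_closed m_assoc m_closed)
  also have "\<dots> = inv a \<otimes> (x \<otimes> a) \<otimes> inv a" using assms by simp
  also have "\<dots> = inv a \<otimes> x" using assms by (metis inv_closed m_assoc m_closed r_inv r_one)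
  finally show ?thesis .
qed

lemma word_in_vars_Cons:
  "word_in_vars n m (l # w) \<longleftrightarrow> (case fst l of XVar i \<Rightarrow> i < n | YVar j \<Rightarrow> j < m) \<and> word_in_vars n m w"
  by (cases l) (auto simp: word_in_vars_def)

lemma eval_word_Cons:
  "eval_word G (l # w) h g = eval_letter G h g l \<otimes>\<^bsub>G\<^esub> eval_word G w h g"
  by (simp add: eval_word_def)

lemma eval_word_Nil: "eval_word G [] h g = \<one>\<^bsub>G\<^esub>"
  by (simp add: eval_word_def)

lemma (in group) eval_letter_closed:
  assumes "case fst l of XVar i \<Rightarrow> i < n | YVar j \<Rightarrow> j < m"
    "length h = n" "set h \<subseteq> carrier G" "length g = m" "set g \<subseteq> carrier G"
  shows "eval_letter G h g l \<in> carrier G"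
proof -
  obtain v e where l: "l = (v, e)" by (cases l)
  show ?thesis
  proof (cases v)
    case (XVar i)
    then have "h ! i \<in> carrier G" using assms l by (auto intro: nth_mem)
    then show ?thesis using l XVar by auto
  next
    case (YVar j)
    then have "g ! j \<in> carrier G" using assms l by (auto intro: nth_mem)
    then show ?thesis using l YVar by auto
  qed
qed

lemma (in group) eval_word_closed:
  assumes "word_in_vars n m w" "length h = n" "set h \<subseteq> carrier G" "length g = m" "set g \<subseteq> carrier G"
  shows "eval_word G w h g \<in> carrier G"
  using assms(1)
proof (induction w)
  case Nil
  then show ?case by (simp add: eval_word_Nil)
next
  case (Cons l w)
  then show ?case using eval_letter_closed[where l=l and n=n and m=m and h=h and g=g] assms
    by (simp add: eval_word_Cons word_in_vars_Cons)
qed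

lemma (in group) eval_letter_comm:
  assumes "case fst l of XVar i \<Rightarrow> i < n | YVar j \<Rightarrow> j < m"
    "length h = n" "set h \<subseteq> carrier G" "length g = m" "set g \<subseteq> carrier G"
    "x \<in> carrier G" "\<forall>i<n. x \<otimes> h!i = h!i \<otimes> x" "\<forall>j<m. x \<otimes> g!j = g!j \<otimes> x"
  shows "x \<otimes> eval_letter G h g l = eval_letter G h g l \<otimes> x"
proof -
  obtain v e where l: "l = (v, e)" by (cases l)
  show ?thesis
  proof (cases v)
    case (XVar i)
    then have "h ! i \<in> carrier G" "x \<otimes> h!i = h!i \<otimes> x" using assms l by (auto intro: nth_mem)
    then show ?thesis using l XVar comm_inv[of x "h!i"] assms by auto
  next
    case (YVar j)
    then have "g ! j \<in> carrier G" "x \<otimes> g!j = g!j \<otimes> x" using assms l by (auto intro: nth_mem)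
    then show ?thesis using l YVar comm_inv[of x "g!j"] assms by auto
  qed
qed

lemma (in group) eval_word_comm:
  assumes "word_in_vars n m w" "length h = n" "set h \<subseteq> carrier G" "length g = m" "set g \<subseteq> carrier G"
    "x \<in> carrier G" "\<forall>i<n. x \<otimes> h!i = h!i \<otimes> x" "\<forall>j<m. x \<otimes> g!j = g!j \<otimes> x"
  shows "x \<otimes> eval_word G w h g = eval_word G w h g \<otimes> x"
  using assms(1)
proof (induction w)
  case Nil
  then show ?case using assms by (simp add: eval_word_Nil)
next
  case (Cons l w)
  then have l: "case fst l of XVar i \<Rightarrow> i < n | YVar j \<Rightarrow> j < m" and w: "word_in_vars n m w"
    by (auto simp: word_in_vars_Cons)
  have c1: "eval_letter G h g l \<in> carrier G" using eval_letter_closed[OF l] assms by auto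
  have c2: "eval_word G w h g \<in> carrier G" using eval_word_closed[OF w] assms by auto
  have e1: "x \<otimes> eval_letter G h g l = eval_letter G h g l \<otimes> x" using eval_letter_comm[OF l] assms by auto
  have e2: "x \<otimes> eval_word G w h g = eval_word G w h g \<otimes> x" using Cons w by auto
  have "x \<otimes> (eval_letter G h g l \<otimes> eval_word G w h g) = (x \<otimes> eval_letter G h g l) \<otimes> eval_word G w h g"
    using c1 c2 assms by (simp add: m_assoc)
  also have "\<dots> = eval_letter G h g l \<otimes> (x \<otimes> eval_word G w h g)" using c1 c2 assms e1 by (simp add: m_assoc)
  also have "\<dots> = (eval_letter G h g l \<otimes> eval_word G w h g) \<otimes> x" using c1 c2 assms e2 by (simp add: m_assoc)
  finally show ?case by (simp add: eval_word_Cons)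
qed


lemma nth_map2': "i < length xs \<Longrightarrow> i < length ys \<Longrightarrow> map2 f xs ys ! i = f (xs ! i) (ys ! i)"
  by simp

lemma (in group) eval_word_split:
  assumes "word_in_vars n m w" "length u = n" "set u \<subseteq> carrier G" "length d = n" "set d \<subseteq> carrier G"
    "length g = m" "set g \<subseteq> carrier G"
    "\<forall>i<n. \<forall>i'<n. d!i \<otimes> u!i' = u!i' \<otimes> d!i" "\<forall>i<n. \<forall>j<m. d!i \<otimes> g!j = g!j \<otimes> d!i"
  shows "eval_word G w (map2 (\<otimes>) u d) g = eval_word G w u g \<otimes> eval_word G w d (replicate m \<one>)"
  using assms(1)
proof (induction w)
  case Nil
  then show ?case by (simp add: eval_word_Nil)
next
  case (Cons l w)
  then have l: "case fst l of XVar i \<Rightarrow> i < n | YVar j \<Rightarrow> j < m" and w: "word_in_vars n m w"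
    by (auto simp: word_in_vars_Cons)
  have o: "length (replicate m \<one>) = m" "set (replicate m \<one>) \<subseteq> carrier G" by auto
  define E where "E = eval_word G w u g"
  define E' where "E' = eval_word G w d (replicate m \<one>)"
  have cE: "E \<in> carrier G" unfolding E_def using eval_word_closed[OF w] assms by auto
  have cE': "E' \<in> carrier G" unfolding E'_def using eval_word_closed[OF w _ _ o] assms by auto
  have IH: "eval_word G w (map2 (\<otimes>) u d) g = E \<otimes> E'" using Cons w by (simp add: E_def E'_def)
  have comE: "d!i \<otimes> E = E \<otimes> d!i" if "i < n" for i
  proof -
    have "d!i \<in> carrier G" using that assms(4,5) nth_mem by blast
    then show ?thesis unfolding E_def using eval_word_comm[OF w, of u g "d!i"] assms that by auto
  qed
  obtain v e where le: "l = (v, e)" by (cases l)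
  show ?case
  proof (cases v)
    case (XVar i)
    then have i: "i < n" using l le by auto
    have cu: "u!i \<in> carrier G" and cd: "d!i \<in> carrier G" using i assms by (auto intro: nth_mem)
    have m2: "map2 (\<otimes>) u d ! i = u!i \<otimes> d!i" using i assms by simp
    have cm: "d!i \<otimes> u!i = u!i \<otimes> d!i" using i assms by auto
    show ?thesis
    proof (cases e)
      case True
      have "(u!i \<otimes> d!i) \<otimes> (E \<otimes> E') = u!i \<otimes> (d!i \<otimes> E) \<otimes> E'"
        using cu cd cE cE' by (simp add: m_assoc)
      also have "\<dots> = (u!i \<otimes> E) \<otimes> (d!i \<otimes> E')" using cu cd cE cE' comE[OF i] by (simp add: m_assoc)
      finally show ?thesis using XVar True le m2 IH
        by (simp add: eval_word_Cons E_def E'_def)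
    next
      case False
      have ci: "inv (d!i) \<otimes> E = E \<otimes> inv (d!i)"
        using comm_inv[OF cE cd] comE[OF i] cE cd by simp
      have cm': "inv (d!i) \<otimes> inv (u!i) = inv (u!i) \<otimes> inv (d!i)"
        using cm cu cd by (metis inv_mult_group)
      have "inv (u!i \<otimes> d!i) \<otimes> (E \<otimes> E') = inv (u!i) \<otimes> (inv (d!i) \<otimes> E) \<otimes> E'"
        using cu cd cE cE' cm' by (simp add: m_assoc inv_mult_group)
      also have "\<dots> = (inv (u!i) \<otimes> E) \<otimes> (inv (d!i) \<otimes> E')" using cu cd cE cE' ci by (simp add: m_assoc)
      finally show ?thesis using XVar False le m2 IH
        by (simp add: eval_word_Cons E_def E'_def)
    qed
  next
    case (YVar j)
    then have j: "j < m" using l le by auto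
    have cg: "g!j \<in> carrier G" using j assms by (auto intro: nth_mem)
    show ?thesis using YVar le IH j cg cE cE'
      by (cases e) (simp_all add: eval_word_Cons E_def E'_def m_assoc)
  qed
qed


lemma nth_subset: "set x \<subseteq> C \<Longrightarrow> i < length x \<Longrightarrow> x ! i \<in> C"
  using nth_mem by blast

lemma map2_closed:
  assumes "group G" "length x = length y" "set x \<subseteq> carrier G" "set y \<subseteq> carrier G"
  shows "set (map2 (\<otimes>\<^bsub>G\<^esub>) x y) \<subseteq> carrier G"
proof
  fix z assume "z \<in> set (map2 (\<otimes>\<^bsub>G\<^esub>) x y)"
  then obtain i where i: "i < length x" "z = x!i \<otimes>\<^bsub>G\<^esub> y!i"
    using assms(2) by (auto simp: in_set_conv_nth)
  then show "z \<in> carrier G" using assms by (auto intro!: group.subgroupE monoid.m_closed group.is_monoid nth_mem)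
qed

lemma pow_group_group:
  assumes G: "group G"
  shows "group (pow_group G n)"
proof (rule groupI)
  interpret group G by (rule G)
  fix x y z
  assume x: "x \<in> carrier (pow_group G n)" and y: "y \<in> carrier (pow_group G n)"
  then show "x \<otimes>\<^bsub>pow_group G n\<^esub> y \<in> carrier (pow_group G n)"
    using map2_closed[OF G, of x y] by (auto simp: pow_group_def)
  assume z: "z \<in> carrier (pow_group G n)"
  show "x \<otimes>\<^bsub>pow_group G n\<^esub> y \<otimes>\<^bsub>pow_group G n\<^esub> z =
        x \<otimes>\<^bsub>pow_group G n\<^esub> (y \<otimes>\<^bsub>pow_group G n\<^esub> z)"
    using x y z by (auto simp: pow_group_def intro!: nth_equalityI m_assoc nth_subset)
next
  interpret group G by (rule G)
  show "\<one>\<^bsub>pow_group G n\<^esub> \<in> carrier (pow_group G n)" by (auto simp: pow_group_def)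
  fix x assume x: "x \<in> carrier (pow_group G n)"
  then show "\<one>\<^bsub>pow_group G n\<^esub> \<otimes>\<^bsub>pow_group G n\<^esub> x = x"
    by (auto simp: pow_group_def nth_subset intro!: nth_equalityI)
  show "\<exists>y\<in>carrier (pow_group G n). y \<otimes>\<^bsub>pow_group G n\<^esub> x = \<one>\<^bsub>pow_group G n\<^esub>"
  proof
    let ?y = "map (\<lambda>a. inv\<^bsub>G\<^esub> a) x"
    have xs: "length x = n" "set x \<subseteq> carrier G" using x by (auto simp: pow_group_def)
    show "?y \<in> carrier (pow_group G n)" using xs by (auto simp: pow_group_def)
    have "map2 (\<otimes>\<^bsub>G\<^esub>) ?y x = replicate n \<one>\<^bsub>G\<^esub>"
    proof (rule nth_equalityI)
      show "length (map2 (\<otimes>\<^bsub>G\<^esub>) ?y x) = length (replicate n \<one>\<^bsub>G\<^esub>)" using xs by simp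
      fix i assume "i < length (map2 (\<otimes>\<^bsub>G\<^esub>) ?y x)"
      then have i: "i < n" using xs by simp
      then have "x ! i \<in> carrier G" using xs nth_subset by metis
      then show "map2 (\<otimes>\<^bsub>G\<^esub>) ?y x ! i = replicate n \<one>\<^bsub>G\<^esub> ! i" using i xs by simp
    qed
    then show "?y \<otimes>\<^bsub>pow_group G n\<^esub> x = \<one>\<^bsub>pow_group G n\<^esub>" by (simp add: pow_group_def)
  qed
qed

lemma pow_group_mult: "x \<otimes>\<^bsub>pow_group G n\<^esub> y = map2 (\<otimes>\<^bsub>G\<^esub>) x y"
  by (simp add: pow_group_def)

lemma pow_group_carrier: "carrier (pow_group G n) = {h. length h = n \<and> set h \<subseteq> carrier G}"
  by (simp add: pow_group_def)


lemma (in group) class_card: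
  assumes b: "b \<in> carrier G" and fin: "finite (rcosets (centralizer G b))"
    and ck: "card (rcosets (centralizer G b)) \<le> k"
  shows "finite ((\<lambda>x. x \<otimes> b \<otimes> inv x) ` carrier G) \<and> card ((\<lambda>x. x \<otimes> b \<otimes> inv x) ` carrier G) \<le> k"
proof -
  let ?C = "centralizer G b"
  define F where "F R = (let y = (SOME y. y \<in> R) in inv y \<otimes> b \<otimes> y)" for R
  have Csub: "?C \<subseteq> carrier G" by (auto simp: centralizer_def)
  have sub: "(\<lambda>x. x \<otimes> b \<otimes> inv x) ` carrier G \<subseteq> F ` (rcosets ?C)"
  proof
    fix a assume "a \<in> (\<lambda>x. x \<otimes> b \<otimes> inv x) ` carrier G"
    then obtain x where x: "x \<in> carrier G" and a: "a = x \<otimes> b \<otimes> inv x" by auto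
    let ?y = "inv x"
    have y: "?y \<in> carrier G" using x by simp
    have R: "?C #> ?y \<in> rcosets ?C" using rcosetsI[OF Csub y] .
    have one: "\<one> \<in> ?C" using b by (auto simp: centralizer_def)
    have "\<one> \<otimes> ?y \<in> ?C #> ?y" using rcosI[OF one Csub y] .
    then have "\<exists>z. z \<in> ?C #> ?y" by blast
    then have zin: "(SOME z. z \<in> ?C #> ?y) \<in> ?C #> ?y" by (rule someI_ex)
    then obtain c where c: "c \<in> ?C" and zeq: "(SOME z. z \<in> ?C #> ?y) = c \<otimes> ?y"
      by (auto simp: r_coset_def)
    have cc: "c \<in> carrier G" and cb: "c \<otimes> b = b \<otimes> c" using c by (auto simp: centralizer_def)
    have key: "inv c \<otimes> (b \<otimes> (c \<otimes> ?y)) = b \<otimes> ?y"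
    proof -
      have "inv c \<otimes> (b \<otimes> (c \<otimes> ?y)) = inv c \<otimes> ((b \<otimes> c) \<otimes> ?y)" using cc b y by (simp add: m_assoc)
      also have "\<dots> = inv c \<otimes> ((c \<otimes> b) \<otimes> ?y)" using cb by simp
      also have "\<dots> = (inv c \<otimes> c) \<otimes> (b \<otimes> ?y)" using cc b y by (metis m_assoc m_closed inv_closed)
      also have "\<dots> = b \<otimes> ?y" using cc b y by simp
      finally show ?thesis .
    qed
    have "F (?C #> ?y) = inv (c \<otimes> ?y) \<otimes> b \<otimes> (c \<otimes> ?y)" unfolding F_def zeq Let_def by (rule refl)
    also have "\<dots> = inv ?y \<otimes> (inv c \<otimes> (b \<otimes> (c \<otimes> ?y)))" using cc b y by (simp add: m_assoc inv_mult_group)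
    also have "\<dots> = a" using key x b a by (simp add: m_assoc)
    finally show "a \<in> F ` (rcosets ?C)" using R by force
  qed
  have "finite (F ` (rcosets ?C))" using fin by simp
  moreover have "card (F ` (rcosets ?C)) \<le> k" using card_image_le[OF fin, of F] ck by linarith
  ultimately show ?thesis using sub by (meson card_mono finite_subset le_trans)
qed

lemma pm_empty: "prob_measure_on_algebra \<Omega> A \<mu> \<Longrightarrow> \<mu> {} = 0"
  unfolding prob_measure_on_algebra_def
  by (metis Un_empty add_cancel_right_right algebra.axioms(1) inf_bot_left ring_of_sets.axioms(1) semiring_of_sets.empty_sets)

lemma pm_subadd:
  assumes pm: "prob_measure_on_algebra \<Omega> A \<mu>" and X: "X \<in> A" and Z: "Z \<in> A"
  shows "\<mu> (X \<union> Z) \<le> \<mu> X + \<mu> Z"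
proof -
  have alg: "algebra \<Omega> A" and nn: "\<forall>X\<in>A. 0 \<le> \<mu> X"
    and add: "\<forall>X\<in>A. \<forall>Y\<in>A. X \<inter> Y = {} \<longrightarrow> \<mu> (X \<union> Y) = \<mu> X + \<mu> Y"
    using pm by (auto simp: prob_measure_on_algebra_def)
  interpret algebra \<Omega> A by (rule alg)
  have d: "Z - X \<in> A" "Z \<inter> X \<in> A" using X Z by auto
  have "X \<union> Z = X \<union> (Z - X)" by auto
  then have "\<mu> (X \<union> Z) = \<mu> X + \<mu> (Z - X)" using add X d by (metis Diff_disjoint)
  moreover have "Z = (Z - X) \<union> (Z \<inter> X)" by auto
  then have "\<mu> Z = \<mu> (Z - X) + \<mu> (Z \<inter> X)" using add d by (metis Diff_disjoint Int_Diff_disjoint inf_commute)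
  moreover have "0 \<le> \<mu> (Z \<inter> X)" using nn d by auto
  ultimately show ?thesis by linarith
qed

lemma pm_translates:
  assumes pm: "prob_measure_on_algebra \<Omega> A \<mu>" and fT: "finite T"
    and FT: "\<forall>t\<in>T. F t \<in> A \<and> \<mu> (F t) = p"
    and lt: "real (card T) * (1 - p) < 1"
  shows "\<exists>z\<in>\<Omega>. \<forall>t\<in>T. z \<in> F t"
proof -
  have alg: "algebra \<Omega> A" and add: "\<forall>X\<in>A. \<forall>Y\<in>A. X \<inter> Y = {} \<longrightarrow> \<mu> (X \<union> Y) = \<mu> X + \<mu> Y"
    and one: "\<mu> \<Omega> = 1"
    using pm by (auto simp: prob_measure_on_algebra_def)
  interpret algebra \<Omega> A by (rule alg)
  have compl: "\<mu> (\<Omega> - F t) = 1 - p" if "t \<in> T" for t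
  proof -
    have Ft: "F t \<in> A" "\<mu> (F t) = p" using FT that by auto
    have "\<Omega> = F t \<union> (\<Omega> - F t)" using sets_into_space[OF Ft(1)] by auto
    then have "\<mu> \<Omega> = \<mu> (F t) + \<mu> (\<Omega> - F t)" using add Ft by (metis Diff_disjoint compl_sets)
    then show ?thesis using one Ft by simp
  qed
  have main: "S \<subseteq> T \<Longrightarrow> (\<Union>t\<in>S. \<Omega> - F t) \<in> A \<and> \<mu> (\<Union>t\<in>S. \<Omega> - F t) \<le> real (card S) * (1 - p)" for S
    using finite_subset[OF _ fT, of S]
  proof (induction S rule: infinite_finite_induct)
    case (infinite S)
    then show ?case by auto
  next
    case empty
    then show ?case using pm_empty[OF pm] by simp
  next
    case (insert t S)
    then have tT: "t \<in> T" and ST: "S \<subseteq> T" by auto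
    have IH: "(\<Union>t\<in>S. \<Omega> - F t) \<in> A" "\<mu> (\<Union>t\<in>S. \<Omega> - F t) \<le> real (card S) * (1 - p)"
      using insert ST by auto
    have Ft: "\<Omega> - F t \<in> A" using FT tT by auto
    have "(\<Union>t\<in>insert t S. \<Omega> - F t) = (\<Omega> - F t) \<union> (\<Union>t\<in>S. \<Omega> - F t)" by auto
    moreover have "\<mu> ((\<Omega> - F t) \<union> (\<Union>t\<in>S. \<Omega> - F t)) \<le> (1 - p) + real (card S) * (1 - p)"
      using pm_subadd[OF pm Ft IH(1)] compl[OF tT] IH(2) by linarith
    ultimately show ?case using insert Ft IH by (auto simp: algebra_simps)
  qed
  show ?thesis
  proof (rule ccontr)
    assume "\<not> ?thesis"
    then have "(\<Union>t\<in>T. \<Omega> - F t) = \<Omega>" by auto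
    then show False using main[of T] one lt by auto
  qed
qed


lemma (in group) inv_cancel_left':
  "x \<in> carrier G \<Longrightarrow> z \<in> carrier G \<Longrightarrow> inv x \<otimes> (x \<otimes> z) = z"
  by (metis inv_closed l_inv l_one m_assoc)

lemma (in group) conj_comm:
  assumes a: "a \<in> carrier G" and y: "y \<in> carrier G" and b: "b \<in> carrier G"
    and eq: "(a \<otimes> y) \<otimes> b \<otimes> inv (a \<otimes> y) = a \<otimes> b \<otimes> inv a"
  shows "y \<otimes> b = b \<otimes> y"
proof -
  have "inv a \<otimes> ((a \<otimes> y) \<otimes> b \<otimes> inv (a \<otimes> y)) \<otimes> (a \<otimes> y) = inv a \<otimes> (a \<otimes> b \<otimes> inv a) \<otimes> (a \<otimes> y)"
    using eq by simp
  then show ?thesis using a y b by (simp add: m_assoc inv_mult_group inv_cancel_left')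
qed

lemma (in group) one_map2:
  assumes "length y = n" "set y \<subseteq> carrier G"
  shows "map2 (\<otimes>) (replicate n \<one>) y = y"
  using assms by (auto intro!: nth_equalityI simp: nth_subset)


theorem corollary3p4:
  fixes G1 :: "('a, 'b) monoid_scheme"
    and k n m :: nat
    and G :: "'a list set"
    and A :: "'a list set set"
    and \<mu> :: "'a list set \<Rightarrow> real"
    and w :: word
    and g :: "'a list"
    and c :: 'a
  assumes "group G1"
    and "k \<ge> 1"
    and "\<forall>a \<in> carrier G1. finite (rcosets\<^bsub>G1\<^esub> (centralizer G1 a))
                            \<and> card (rcosets\<^bsub>G1\<^esub> (centralizer G1 a)) \<le> k"
    and "subgroup G (pow_group G1 n)"
    and "prob_measure_on_algebra G A \<mu>"
    and "left_invariant (pow_group G1 n) G A \<mu>"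
    and "word_in_vars n m w"
    and "length g = m" and "set g \<subseteq> carrier G1"
    and "c \<in> carrier G1"
    and "\<not> (\<forall>h \<in> G. eval_word G1 w h g = c)"
  shows "inner_measure A \<mu> {h \<in> G. eval_word G1 w h g = c}
           \<le> 1 - 1 / (2 * real k ^ (n^2 + m * n))"
proof -
  note grp = assms(1) and k1 = assms(2) and cent = assms(3) and sg = assms(4) and pm = assms(5)
    and li = assms(6) and wv = assms(7) and lg = assms(8) and sgc = assms(9) and nall = assms(11)
  interpret G1: group G1 by (rule grp)
  define P where "P = pow_group G1 n"
  interpret P: group P unfolding P_def by (rule pow_group_group[OF grp])
  have sgP: "subgroup G P" using sg unfolding P_def .
  have GP: "G \<subseteq> carrier P" using subgroup.subset[OF sgP] .
  have carP: "x \<in> carrier P \<longleftrightarrow> length x = n \<and> set x \<subseteq> carrier G1" for x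
    by (simp add: P_def pow_group_def)
  have multP: "x \<otimes>\<^bsub>P\<^esub> y = map2 (\<otimes>\<^bsub>G1\<^esub>) x y" for x y by (simp add: P_def pow_group_def)
  define E where "E h = eval_word G1 w h g" for h
  define X where "X = {h \<in> G. E h = c}"
  define K where "K = k ^ (n^2 + m * n)"
  have K1: "K \<ge> 1" using k1 unfolding K_def by simp
  have Kr: "real K = real k ^ (n^2 + m * n)" unfolding K_def by simp
  define B where "B = 1 - 1 / (2 * real K)"
  have alg: "algebra G A" using pm by (simp add: prob_measure_on_algebra_def)
  interpret algebra G A by (rule alg)
  have bound: "\<mu> Y \<le> B" if Y: "Y \<in> A" "Y \<subseteq> X" for Y
  proof (rule ccontr)
    assume "\<not> \<mu> Y \<le> B"
    then have big: "\<mu> Y > B" by simp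
    have "B \<ge> 1/2" using K1 unfolding B_def by (simp add: field_simps)
    then have "\<mu> Y > 0" using big by linarith
    then have Yne: "Y \<noteq> {}" using pm_empty[OF pm] by auto
    define one where "one = replicate n \<one>\<^bsub>G1\<^esub>"
    obtain u where uG: "u \<in> G" and Eu: "E u \<noteq> E one"
    proof (cases "E one = c")
      case True
      then show ?thesis using nall that unfolding E_def by auto
    next
      case False
      then obtain y where "y \<in> Y" using Yne by auto
      then have "y \<in> G" "E y = c" using Y unfolding X_def by auto
      then show ?thesis using that False by auto
    qed
    have uc: "length u = n" "set u \<subseteq> carrier G1" using uG GP carP by auto
    define ug where "ug = u @ g"
    have lug: "length ug = n + m" using uc lg unfolding ug_def by simp
    have ugc: "ug ! j \<in> carrier G1" if "j < n + m" for j
      using that lug uc sgc unfolding ug_def by (intro nth_subset) auto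
    define I where "I = {..<n} \<times> {..<n+m}"
    define cls where "cls b = (\<lambda>x. x \<otimes>\<^bsub>G1\<^esub> b \<otimes>\<^bsub>G1\<^esub> inv\<^bsub>G1\<^esub> x) ` carrier G1" for b
    define \<phi> where "\<phi> z = restrict (\<lambda>p. z ! fst p \<otimes>\<^bsub>G1\<^esub> ug ! snd p \<otimes>\<^bsub>G1\<^esub> inv\<^bsub>G1\<^esub> (z ! fst p)) I" for z
    have clsb: "finite (cls (ug ! j)) \<and> card (cls (ug ! j)) \<le> k" if "j < n + m" for j
      using G1.class_card[of "ug ! j" k] ugc[OF that] cent unfolding cls_def by auto
    have phiG: "\<phi> ` G \<subseteq> PiE I (\<lambda>p. cls (ug ! snd p))"
    proof
      fix v assume "v \<in> \<phi> ` G"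
      then obtain z where z: "z \<in> G" "v = \<phi> z" by auto
      have zc: "length z = n" "set z \<subseteq> carrier G1" using z GP carP by auto
      show "v \<in> PiE I (\<lambda>p. cls (ug ! snd p))"
        unfolding z(2) \<phi>_def
      proof (subst restrict_PiE_iff, intro ballI)
        fix p assume "p \<in> I"
        then have "fst p < n" by (auto simp: I_def)
        then have "z ! fst p \<in> carrier G1" using zc nth_subset by metis
        then show "z ! fst p \<otimes>\<^bsub>G1\<^esub> ug ! snd p \<otimes>\<^bsub>G1\<^esub> inv\<^bsub>G1\<^esub> (z ! fst p) \<in> cls (ug ! snd p)"
          unfolding cls_def by blast
      qed
    qed
    have finI: "finite I" unfolding I_def by simp
    have finPi: "finite (PiE I (\<lambda>p. cls (ug ! snd p)))"
      using finI clsb by (intro finite_PiE) (auto simp: I_def)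
    have "card (PiE I (\<lambda>p. cls (ug ! snd p))) = (\<Prod>p\<in>I. card (cls (ug ! snd p)))"
      using card_PiE[OF finI] .
    also have "\<dots> \<le> (\<Prod>p\<in>I. k)"
      using clsb by (intro prod_mono) (auto simp: I_def)
    also have "\<dots> = K" unfolding K_def I_def by (simp add: power2_eq_square algebra_simps)
    finally have cardPi: "card (PiE I (\<lambda>p. cls (ug ! snd p))) \<le> K" .
    have finphi: "finite (\<phi> ` G)" using finite_subset[OF phiG finPi] .
    have cardphi: "card (\<phi> ` G) \<le> K" using card_mono[OF finPi phiG] cardPi by linarith
    define sel where "sel v = (SOME s. s \<in> G \<and> \<phi> s = v)" for v
    have sel: "sel (\<phi> z) \<in> G \<and> \<phi> (sel (\<phi> z)) = \<phi> z" if "z \<in> G" for z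
      unfolding sel_def by (rule someI_ex) (use that in blast)
    define S where "S = sel ` (\<phi> ` G)"
    define iu where "iu = inv\<^bsub>P\<^esub> u"
    have iuG: "iu \<in> G" unfolding iu_def using subgroup.m_inv_closed[OF sgP uG] .
    define T where "T = S \<union> (\<lambda>s. s \<otimes>\<^bsub>P\<^esub> iu) ` S"
    have SG: "S \<subseteq> G" unfolding S_def using sel by auto
    have TG: "T \<subseteq> G" unfolding T_def using SG iuG subgroup.m_closed[OF sgP] by auto
    have finS: "finite S" unfolding S_def using finphi by simp
    have cardS: "card S \<le> K" unfolding S_def using card_image_le[OF finphi, of sel] cardphi by linarith
    have finT: "finite T" unfolding T_def using finS by simp
    have "card T \<le> card S + card ((\<lambda>s. s \<otimes>\<^bsub>P\<^esub> iu) ` S)" unfolding T_def by (rule card_Un_le)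
    also have "\<dots> \<le> 2 * K" using card_image_le[OF finS, of "\<lambda>s. s \<otimes>\<^bsub>P\<^esub> iu"] cardS by linarith
    finally have cardT: "card T \<le> 2 * K" .
    define F where "F t = (\<lambda>x. t \<otimes>\<^bsub>pow_group G1 n\<^esub> x) ` Y" for t
    have FT: "\<forall>t\<in>T. F t \<in> A \<and> \<mu> (F t) = \<mu> Y"
      using li TG Y(1) unfolding left_invariant_def F_def by blast
    have lt: "real (card T) * (1 - \<mu> Y) < 1"
    proof (cases "1 - \<mu> Y \<le> 0")
      case True
      have "real (card T) * (1 - \<mu> Y) \<le> 0" using True by (intro mult_nonneg_nonpos) auto
      then show ?thesis by linarith
    next
      case False
      have "real (card T) * (1 - \<mu> Y) \<le> (2 * real K) * (1 - \<mu> Y)"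
        using cardT False by (intro mult_right_mono) auto
      also have "\<dots> < (2 * real K) * (1 / (2 * real K))"
        using big K1 unfolding B_def by (intro mult_strict_left_mono) auto
      also have "\<dots> = 1" using K1 by simp
      finally show ?thesis .
    qed
    obtain z where zG: "z \<in> G" and zT: "\<forall>t\<in>T. z \<in> F t"
      using pm_translates[OF pm finT FT lt] by blast
    define s where "s = sel (\<phi> z)"
    have sG: "s \<in> G" and phis: "\<phi> s = \<phi> z" using sel[OF zG] unfolding s_def by auto
    have sS: "s \<in> S" unfolding S_def s_def using zG by blast
    have sT: "s \<in> T" "s \<otimes>\<^bsub>P\<^esub> iu \<in> T" using sS unfolding T_def by auto
    obtain y1 where y1: "y1 \<in> Y" "z = s \<otimes>\<^bsub>P\<^esub> y1"
      using zT sT(1) unfolding F_def P_def by auto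
    obtain y2 where y2: "y2 \<in> Y" "z = (s \<otimes>\<^bsub>P\<^esub> iu) \<otimes>\<^bsub>P\<^esub> y2"
      using zT sT(2) unfolding F_def P_def by auto
    have y1G: "y1 \<in> G" and y2G: "y2 \<in> G" using y1 y2 Y unfolding X_def by auto
    have sP: "s \<in> carrier P" and uP: "u \<in> carrier P" and y1P: "y1 \<in> carrier P" and y2P: "y2 \<in> carrier P"
      and iuP: "iu \<in> carrier P"
      using sG uG y1G y2G iuG GP by auto
    have "s \<otimes>\<^bsub>P\<^esub> y1 = s \<otimes>\<^bsub>P\<^esub> (iu \<otimes>\<^bsub>P\<^esub> y2)" using y1 y2 sP iuP y2P by (simp add: P.m_assoc)
    then have "y1 = iu \<otimes>\<^bsub>P\<^esub> y2" using sP y1P iuP y2P by simp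
    then have y2eq: "y2 = u \<otimes>\<^bsub>P\<^esub> y1" unfolding iu_def using uP y2P
      by (simp add: P.m_assoc[symmetric])
    have y1c: "length y1 = n" "set y1 \<subseteq> carrier G1" using y1P carP by auto
    have sc: "length s = n" "set s \<subseteq> carrier G1" using sP carP by auto
    have comm: "y1 ! i \<otimes>\<^bsub>G1\<^esub> ug ! j = ug ! j \<otimes>\<^bsub>G1\<^esub> y1 ! i" if ij: "i < n" "j < n + m" for i j
    proof -
      have pI: "(i, j) \<in> I" using ij unfolding I_def by auto
      have "\<phi> z (i, j) = \<phi> s (i, j)" using phis by simp
      then have eq: "z ! i \<otimes>\<^bsub>G1\<^esub> ug ! j \<otimes>\<^bsub>G1\<^esub> inv\<^bsub>G1\<^esub> (z ! i) = s ! i \<otimes>\<^bsub>G1\<^esub> ug ! j \<otimes>\<^bsub>G1\<^esub> inv\<^bsub>G1\<^esub> (s ! i)"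
        using pI unfolding \<phi>_def by simp
      have zi: "z ! i = s ! i \<otimes>\<^bsub>G1\<^esub> y1 ! i" using y1(2) ij sc y1c by (simp add: multP)
      show ?thesis
        using G1.conj_comm[of "s ! i" "y1 ! i" "ug ! j"] eq zi ugc[OF ij(2)] ij sc y1c
        by (simp add: nth_subset)
    qed
    have cu: "\<forall>i<n. \<forall>i'<n. y1 ! i \<otimes>\<^bsub>G1\<^esub> u ! i' = u ! i' \<otimes>\<^bsub>G1\<^esub> y1 ! i"
    proof (intro allI impI)
      fix i i' assume "i < n" "i' < n"
      then show "y1 ! i \<otimes>\<^bsub>G1\<^esub> u ! i' = u ! i' \<otimes>\<^bsub>G1\<^esub> y1 ! i"
        using comm[of i i'] uc unfolding ug_def by (simp add: nth_append)
    qed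
    have cg: "\<forall>i<n. \<forall>j<m. y1 ! i \<otimes>\<^bsub>G1\<^esub> g ! j = g ! j \<otimes>\<^bsub>G1\<^esub> y1 ! i"
    proof (intro allI impI)
      fix i j assume "i < n" "j < m"
      then show "y1 ! i \<otimes>\<^bsub>G1\<^esub> g ! j = g ! j \<otimes>\<^bsub>G1\<^esub> y1 ! i"
        using comm[of i "n + j"] uc unfolding ug_def by (simp add: nth_append)
    qed
    have onec: "length one = n" "set one \<subseteq> carrier G1" unfolding one_def by auto
    have c1: "\<forall>i<n. \<forall>i'<n. y1 ! i \<otimes>\<^bsub>G1\<^esub> one ! i' = one ! i' \<otimes>\<^bsub>G1\<^esub> y1 ! i"
      using y1c unfolding one_def by (auto simp: nth_subset)
    define E' where "E' = eval_word G1 w y1 (replicate m \<one>\<^bsub>G1\<^esub>)"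
    have E'c: "E' \<in> carrier G1" unfolding E'_def
      by (rule G1.eval_word_closed[OF wv y1c]) auto
    have "E y2 = E u \<otimes>\<^bsub>G1\<^esub> E'"
      unfolding E_def E'_def y2eq multP
      using G1.eval_word_split[OF wv uc y1c lg sgc cu cg] .
    moreover have "E y1 = E one \<otimes>\<^bsub>G1\<^esub> E'"
      unfolding E_def E'_def
      using G1.eval_word_split[OF wv onec y1c lg sgc c1 cg] G1.one_map2[OF y1c] one_def by simp
    moreover have "E y1 = c" "E y2 = c" using y1 y2 Y unfolding X_def by auto
    moreover have "E u \<in> carrier G1" "E one \<in> carrier G1"
      unfolding E_def using G1.eval_word_closed[OF wv] uc onec lg sgc by auto
    ultimately have "E u = E one" using E'c by (metis G1.right_cancel)
    then show False using Eu by simp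
  qed
  have ne: "{\<mu> Y | Y. Y \<in> A \<and> Y \<subseteq> X} \<noteq> {}" by blast
  have "inner_measure A \<mu> X \<le> B"
    unfolding inner_measure_def using bound by (intro cSup_least[OF ne]) auto
  then show ?thesis unfolding X_def E_def B_def Kr .
qed

end
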